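(* For every $n\geq 2$, the pair $(H_n,v)$ is neutral for the glue operator, where $H_n$ is the hanging split graph of size $n$ and $v$ is its distinguished clique vertex.
   Context: For $n\geq 2$, the hanging split graph $H_n$ consists of a clique on vertices $\{v,v_1,\ldots,v_{n-1}\}$, an independent set $\{u_1,\ldots,u_{n-1}\}$, and edges $u_iv_i$ for $1\le i\le n-1$ (so $H_2$ is the path on three vertices with $v$ an endpoint). The Maker-Breaker domination game on a graph: Dominator and Staller alternately choose a not-yet-chosen vertex (no passing), starting with all vertices unchosen; when all vertices are chosen, Dominator wins if his vertices form a dominating set of the graph, otherwise Staller wins. The outcome $o(\cdot)$ is $\mathcal D$ if Dominator has a winning strategy both as first and as second player, $\mathcal S$ if Staller has a winning strategy both as first and as second player, and $\mathcal N$ if the first player has a winning strategy. For disjoint graphs $G,H$ and vertices $u\in V(G)$, $v\in V(H)$, the glued graph $G\odot_{u,v}H$ is obtained from the disjoint union by identifying $u$ and $v$ into one new vertex $w$, adjacent to all former neighbors of $u$ in $G$ and of $v$ in $H$. The pair $(H,v)$ is neutral for the glue operator if for every graph $G$ and every vertex $u$ of $G$, $o(G\odot_{u,v}H)=o(G)$. *)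

theory Defs
  imports Main
begin

type_synonym 'a graph = "'a set \<times> ('a \<Rightarrow> 'a \<Rightarrow> bool)"

definition verts :: "'a graph \<Rightarrow> 'a set" where "verts G = fst G"
definition adj :: "'a graph \<Rightarrow> 'a \<Rightarrow> 'a \<Rightarrow> bool" where "adj G = snd G"

definition wf_graph :: "'a graph \<Rightarrow> bool" where
  "wf_graph G \<longleftrightarrow> finite (verts G)
     \<and> (\<forall>x y. adj G x y \<longrightarrow> x \<in> verts G \<and> y \<in> verts G)
     \<and> (\<forall>x y. adj G x y \<longrightarrow> adj G y x)
     \<and> (\<forall>x. \<not> adj G x x)"

definition dominating :: "'a graph \<Rightarrow> 'a set \<Rightarrow> bool" where
  "dominating G D \<longleftrightarrow> D \<subseteq> verts G \<and> (\<forall>x\<in>verts G. x \<in> D \<or> (\<exists>y\<in>D. adj G x y))"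

text \<open>dom_wins G D S t: in the position where Dominator has chosen D, Staller has chosen S,
  and it is Dominator's turn iff t, Dominator has a winning strategy.\<close>
inductive dom_wins :: "'a graph \<Rightarrow> 'a set \<Rightarrow> 'a set \<Rightarrow> bool \<Rightarrow> bool" for G where
  over: "verts G - (D \<union> S) = {} \<Longrightarrow> dominating G D \<Longrightarrow> dom_wins G D S t"
| dmove: "x \<in> verts G - (D \<union> S) \<Longrightarrow> dom_wins G (insert x D) S False \<Longrightarrow> dom_wins G D S True"
| smove: "verts G - (D \<union> S) \<noteq> {} \<Longrightarrow>
          (\<forall>x\<in>verts G - (D \<union> S). dom_wins G D (insert x S) True) \<Longrightarrow> dom_wins G D S False"

datatype outcome = OutD | OutS | OutN | OutP  (* OutP: second player wins; never occurs *)

definition outcome :: "'a graph \<Rightarrow> outcome" where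
  "outcome G = (let d1 = dom_wins G {} {} True; d2 = dom_wins G {} {} False in
     if d1 \<and> d2 then OutD
     else if \<not> d1 \<and> \<not> d2 then OutS
     else if d1 \<and> \<not> d2 then OutN
     else OutP)"

text \<open>G \<odot>_{u,v} H on vertex type 'a + 'b; the identified vertex w is Inl u.\<close>
definition glue :: "'a graph \<Rightarrow> 'a \<Rightarrow> 'b graph \<Rightarrow> 'b \<Rightarrow> ('a + 'b) graph" where
  "glue G u H v =
    (Inl ` verts G \<union> Inr ` (verts H - {v}),
     (\<lambda>p q. case (p, q) of
        (Inl x, Inl y) \<Rightarrow> adj G x y
      | (Inr x, Inr y) \<Rightarrow> x \<noteq> v \<and> y \<noteq> v \<and> adj H x y
      | (Inl x, Inr y) \<Rightarrow> x = u \<and> y \<noteq> v \<and> adj H v y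
      | (Inr x, Inl y) \<Rightarrow> y = u \<and> x \<noteq> v \<and> adj H x v))"

datatype hs_vertex = Vc | Vi nat | Ui nat

definition hanging_split :: "nat \<Rightarrow> hs_vertex graph" where
  "hanging_split n =
    ({Vc} \<union> Vi ` {1..n-1} \<union> Ui ` {1..n-1},
     (\<lambda>x y. case (x, y) of
        (Vc, Vi j) \<Rightarrow> j \<in> {1..n-1}
      | (Vi i, Vc) \<Rightarrow> i \<in> {1..n-1}
      | (Vi i, Vi j) \<Rightarrow> i \<in> {1..n-1} \<and> j \<in> {1..n-1} \<and> i \<noteq> j
      | (Vi i, Ui j) \<Rightarrow> i \<in> {1..n-1} \<and> i = j
      | (Ui i, Vi j) \<Rightarrow> i \<in> {1..n-1} \<and> i = j
      | _ \<Rightarrow> False))"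

end

theory Submission
  imports Defs
begin


lemma dominating_mono:
  "dominating \<Gamma> A \<Longrightarrow> A \<subseteq> B \<Longrightarrow> B \<subseteq> verts \<Gamma> \<Longrightarrow> dominating \<Gamma> B"
  unfolding dominating_def by blast

lemma dead:
  assumes "dom_wins \<Gamma> D S t" "z \<in> verts \<Gamma>" "z \<in> S" "z \<notin> D"
    "\<forall>y. adj \<Gamma> z y \<longrightarrow> y \<in> S \<and> y \<notin> D"
  shows False
  using assms
proof (induction rule: dom_wins.induct)
  case (over D S t)
  then show ?case unfolding dominating_def by blast
next
  case (dmove x D S)
  have "z \<notin> insert x D" using dmove.prems dmove.hyps(1) by auto
  moreover have "\<forall>y. adj \<Gamma> z y \<longrightarrow> y \<in> S \<and> y \<notin> insert x D" using dmove.prems dmove.hyps(1) by auto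
  ultimately show ?case using dmove.IH dmove.prems by blast
next
  case (smove D S)
  then obtain y where y: "y \<in> verts \<Gamma> - (D \<union> S)" by blast
  with smove.IH have "dom_wins \<Gamma> D (insert y S) True \<and> (z \<in> verts \<Gamma> \<longrightarrow> z \<in> insert y S \<longrightarrow> z \<notin> D \<longrightarrow> (\<forall>ya. adj \<Gamma> z ya \<longrightarrow> ya \<in> insert y S \<and> ya \<notin> D) \<longrightarrow> False)"
    by blast
  then show ?case using smove.prems by auto
qed

lemma final_dom:
  assumes "dom_wins \<Gamma> D S t"
  shows "dominating \<Gamma> (D \<union> (verts \<Gamma> - S))"
  using assms
proof (induction rule: dom_wins.induct)
  case (over D S t)
  then have "D \<union> (verts \<Gamma> - S) = D" unfolding dominating_def by blast
  then show ?case using over by simp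
next
  case (dmove x D S)
  then have "insert x D \<union> (verts \<Gamma> - S) = D \<union> (verts \<Gamma> - S)" by blast
  then show ?case using dmove.IH by simp
next
  case (smove D S)
  then obtain y where y: "y \<in> verts \<Gamma> - (D \<union> S)" by blast
  with smove.IH have h: "dominating \<Gamma> (D \<union> (verts \<Gamma> - insert y S))" by blast
  then have "D \<subseteq> verts \<Gamma>" unfolding dominating_def by blast
  then have "D \<union> (verts \<Gamma> - insert y S) \<subseteq> D \<union> (verts \<Gamma> - S)" "D \<union> (verts \<Gamma> - S) \<subseteq> verts \<Gamma>" by auto
  then show ?case using dominating_mono[OF h] by blast
qed

locale gs =
  fixes G :: "'a graph" and u :: 'a and n :: nat
  assumes wf: "wf_graph G" and uin: "u \<in> verts G"
begin

abbreviation "H \<equiv> hanging_split n"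
abbreviation "G' \<equiv> glue G u H Vc"
abbreviation "K \<equiv> {1..n-1}"
abbreviation "HV \<equiv> Vi ` K \<union> Ui ` K"

lemma verts_H: "verts H = insert Vc HV"
  unfolding hanging_split_def verts_def by auto

lemma verts_G': "verts G' = Inl ` verts G \<union> Inr ` HV"
proof -
  have "verts H - {Vc} = HV" using verts_H by auto
  then show ?thesis unfolding glue_def verts_def by simp
qed

lemma adj_ll[simp]: "adj G' (Inl x) (Inl z) = adj G x z"
  unfolding glue_def adj_def by simp

lemma adjH_Vc: "adj H Vc h \<Longrightarrow> \<exists>i. h = Vi i"
  unfolding hanging_split_def adj_def by (cases h) auto

lemma adjH_U: "adj H (Ui i) h \<Longrightarrow> h = Vi i"
  unfolding hanging_split_def adj_def by (cases h) auto

lemma adj_lr: "adj G' (Inl x) (Inr h) \<Longrightarrow> x = u \<and> (\<exists>i. h = Vi i)"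
  using adjH_Vc unfolding glue_def adj_def by auto

lemma adj_U: "adj G' (Inr (Ui i)) q \<Longrightarrow> q = Inr (Vi i)"
  using adjH_U unfolding glue_def adj_def by (cases q) auto

lemma adj_VU: "i \<in> K \<Longrightarrow> adj G' (Inr (Vi i)) (Inr (Ui i))"
  unfolding glue_def adj_def hanging_split_def by auto

lemma adj_UV: "i \<in> K \<Longrightarrow> adj G' (Inr (Ui i)) (Inr (Vi i))"
  unfolding glue_def adj_def hanging_split_def by auto

lemma fin: "finite (verts G')"
  using wf unfolding verts_G' wf_graph_def by auto


lemma force:
  assumes w: "dom_wins G' D S False" and i: "i \<in> K"
    and a: "Inr (Vi i) \<notin> D \<union> S" and b: "Inr (Ui i) \<notin> D \<union> S"
  shows "dom_wins G' (insert (Inr (Ui i)) D) (insert (Inr (Vi i)) S) False"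
proof -
  have av: "Inr (Vi i) \<in> verts G'" and bv: "Inr (Ui i) \<in> verts G'" using i verts_G' by auto
  from w have h1: "dom_wins G' D (insert (Inr (Vi i)) S) True"
    by (cases rule: dom_wins.cases) (use av a in auto)
  from h1 show ?thesis
  proof (cases rule: dom_wins.cases)
    case over
    then show ?thesis using bv b by auto
  next
    case (dmove x)
    show ?thesis
    proof (cases "x = Inr (Ui i)")
      case True
      then show ?thesis using dmove by simp
    next
      case False
      from dmove(2) have "dom_wins G' (insert x D) (insert (Inr (Ui i)) (insert (Inr (Vi i)) S)) True"
        by (cases rule: dom_wins.cases) (use bv b False in auto)
      then have False
      proof (rule dead)
        show "Inr (Ui i) \<in> verts G'" by (rule bv)
        show "Inr (Ui i) \<in> insert (Inr (Ui i)) (insert (Inr (Vi i)) S)" by simp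
        show "Inr (Ui i) \<notin> insert x D" using False b by simp
        show "\<forall>y. adj G' (Inr (Ui i)) y \<longrightarrow> y \<in> insert (Inr (Ui i)) (insert (Inr (Vi i)) S) \<and> y \<notin> insert x D"
          using adj_U dmove(1) a by blast
      qed
      then show ?thesis ..
    qed
  next
    case smove
    then show ?thesis by simp
  qed
qed

lemma force_all:
  assumes "finite I" "I \<subseteq> K" "\<forall>i\<in>I. Inr (Vi i) \<notin> D \<union> S \<and> Inr (Ui i) \<notin> D \<union> S"
    "dom_wins G' D S False"
  shows "dom_wins G' (D \<union> Inr ` Ui ` I) (S \<union> Inr ` Vi ` I) False"
  using assms
proof (induction I rule: finite_induct)
  case empty
  then show ?case by simp
next
  case (insert i I)
  then have h: "dom_wins G' (D \<union> Inr ` Ui ` I) (S \<union> Inr ` Vi ` I) False" by auto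
  have "Inr (Vi i) \<notin> (D \<union> Inr ` Ui ` I) \<union> (S \<union> Inr ` Vi ` I)"
       "Inr (Ui i) \<notin> (D \<union> Inr ` Ui ` I) \<union> (S \<union> Inr ` Vi ` I)" using insert by auto
  from force[OF h _ this] insert.prems show ?case by simp
qed


lemma sim_dom:
  assumes fd: "dominating G' (D' \<union> (verts G' - S'))"
    and fr: "verts G' - (D' \<union> S') = Inl ` (verts G - (A \<union> B)) \<union> E"
    and em: "verts G - (A \<union> B) = {}"
    and EJ: "E \<subseteq> {Inl u, Inr (Ui j)}"
    and Eu: "E \<noteq> {} \<longrightarrow> u \<in> A"
    and DA: "\<forall>x. Inl x \<in> D' \<longrightarrow> x \<in> A"
    and VA: "(\<exists>i. Inr (Vi i) \<in> D') \<longrightarrow> u \<in> A"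
    and AV: "A \<subseteq> verts G"
  shows "dominating G A"
  unfolding dominating_def
proof (intro conjI ballI)
  show "A \<subseteq> verts G" by fact
  fix x assume x: "x \<in> verts G"
  have sub: "D' \<union> (verts G' - S') \<subseteq> D' \<union> E" using fr em by auto
  have "Inl x \<in> verts G'" using x verts_G' by auto
  with fd obtain y where y: "y \<in> D' \<union> E" "y = Inl x \<or> adj G' (Inl x) y"
    unfolding dominating_def using sub by blast
  show "x \<in> A \<or> (\<exists>y\<in>A. adj G x y)"
  proof (cases y)
    case (Inl z)
    then have "z \<in> A" using y DA EJ Eu by auto
    then show ?thesis using y Inl by auto
  next
    case (Inr h)
    then have "Inl x \<noteq> y" by simp
    with y have a: "adj G' (Inl x) (Inr h)" using Inr by simp
    from adj_lr[OF a] obtain i where "x = u" "h = Vi i" by blast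
    then have "y \<in> D'" using y EJ Inr by auto
    then have "u \<in> A" using VA Inr \<open>h = Vi i\<close> by blast
    then show ?thesis using \<open>x = u\<close> by simp
  qed
qed


definition simrel where
  "simrel j D' S' t A B t' E \<longleftrightarrow>
     verts G' - (D' \<union> S') = Inl ` (verts G - (A \<union> B)) \<union> E
   \<and> E \<subseteq> {Inl u, Inr (Ui j)}
   \<and> (E \<noteq> {} \<longrightarrow> u \<in> A)
   \<and> (\<forall>x. Inl x \<in> D' \<longrightarrow> x \<in> A)
   \<and> ((\<exists>i. Inr (Vi i) \<in> D') \<longrightarrow> u \<in> A)
   \<and> A \<subseteq> verts G
   \<and> (((E = {} \<or> E = {Inl u, Inr (Ui j)}) \<and> t' = t)
      \<or> (\<exists>p\<in>{Inl u, Inr (Ui j)}. E = {p} \<and> t = False \<and> t' = True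
            \<and> {Inl u, Inr (Ui j)} - {p} \<subseteq> D'))"

lemma sim_dom2:
  assumes "dominating G' (D' \<union> (verts G' - S'))" "simrel j D' S' t A B t' E"
    "verts G - (A \<union> B) = {}"
  shows "dominating G A"
proof -
  from assms(2) have r: "verts G' - (D' \<union> S') = Inl ` (verts G - (A \<union> B)) \<union> E"
   "E \<subseteq> {Inl u, Inr (Ui j)}" "E \<noteq> {} \<longrightarrow> u \<in> A" "\<forall>x. Inl x \<in> D' \<longrightarrow> x \<in> A"
   "(\<exists>i. Inr (Vi i) \<in> D') \<longrightarrow> u \<in> A" "A \<subseteq> verts G"
    unfolding simrel_def by simp_all
  show ?thesis by (rule sim_dom[OF assms(1) r(1) assms(3) r(2-6)])
qed

lemma sim:
  assumes "dom_wins G' D' S' t"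
  shows "simrel j D' S' t A B t' E \<Longrightarrow> dom_wins G A B t'"
  using assms
proof (induction arbitrary: A B t' E rule: dom_wins.induct)
  case (over D' S' t)
  note R = over.prems[unfolded simrel_def]
  have em: "verts G - (A \<union> B) = {}" "E = {}" using over.hyps R by auto
  have "dominating G' (D' \<union> (verts G' - S'))"
    using final_dom[OF dom_wins.over[OF over.hyps]] .
  then have "dominating G A" using sim_dom2 em over.prems by blast
  then show ?case using em by (intro dom_wins.over) auto
next
  case (dmove x D' S')
  note R = dmove.prems[unfolded simrel_def]
  show ?case
  proof (cases "verts G - (A \<union> B) = {}")
    case True
    have "dominating G' (D' \<union> (verts G' - S'))"
      using final_dom[OF dom_wins.dmove[OF dmove.hyps]] .
    then have "dominating G A" using sim_dom2 True dmove.prems by blast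
    then show ?thesis using True by (intro dom_wins.over) auto
  next
    case False
    have tt: "t' = True" "E = {} \<or> E = {Inl u, Inr (Ui j)}" using R by auto
    show ?thesis
    proof (cases "x \<in> E")
      case True
      then have E2: "E = {Inl u, Inr (Ui j)}" using tt by auto
      have "simrel j (insert x D') S' False A B True (E - {x})"
        unfolding simrel_def
      proof (intro conjI)
        show "verts G' - (insert x D' \<union> S') = Inl ` (verts G - (A \<union> B)) \<union> (E - {x})"
          using R True by auto
      qed (use R True E2 in auto)
      then show ?thesis using dmove.IH tt by simp
    next
      case False
      then obtain y where y: "x = Inl y" "y \<in> verts G - (A \<union> B)" using R dmove.hyps(1) by blast
      have "simrel j (insert x D') S' False (insert y A) B False E"
        unfolding simrel_def
      proof (intro conjI)
        show "verts G' - (insert x D' \<union> S') = Inl ` (verts G - (insert y A \<union> B)) \<union> E"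
          using R False y by auto
      qed (use R y tt in auto)
      then have dw: "dom_wins G (insert y A) B False" using dmove.IH by simp
      show ?thesis using dom_wins.dmove[OF y(2) dw] tt(1) by simp
    qed
  qed
next
  case (smove D' S')
  note R = smove.prems[unfolded simrel_def]
  show ?case
  proof (cases "verts G - (A \<union> B) = {}")
    case True
    have "dominating G' (D' \<union> (verts G' - S'))"
      using final_dom[OF dom_wins.smove[OF smove.hyps(1)]] smove.IH by blast
    then have "dominating G A" using sim_dom2 True smove.prems by blast
    then show ?thesis using True by (intro dom_wins.over) auto
  next
    case False
    show ?thesis
    proof (cases "\<exists>p\<in>{Inl u, Inr (Ui j)}. E = {p} \<and> t' = True \<and> {Inl u, Inr (Ui j)} - {p} \<subseteq> D'")
      case True
      then obtain p where p: "p \<in> {Inl u, Inr (Ui j)}" "E = {p}" "t' = True" by blast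
      have pf: "p \<in> verts G' - (D' \<union> S')" using R p by auto
      have "simrel j D' (insert p S') True A B True {}"
        unfolding simrel_def
      proof (intro conjI)
        show "verts G' - (D' \<union> insert p S') = Inl ` (verts G - (A \<union> B)) \<union> {}"
          using R p by auto
      qed (use R in auto)
      then show ?thesis using smove.IH pf p by blast
    next
      case nt: False
      then have tt: "t' = False" "E = {} \<or> E = {Inl u, Inr (Ui j)}" using R by auto
      show ?thesis unfolding tt(1)
      proof (rule dom_wins.smove)
        show "verts G - (A \<union> B) \<noteq> {}" by fact
        show "\<forall>y\<in>verts G - (A \<union> B). dom_wins G A (insert y B) True"
        proof
          fix y assume y: "y \<in> verts G - (A \<union> B)"
          then have yf: "Inl y \<in> verts G' - (D' \<union> S')" using R by auto
          have "simrel j D' (insert (Inl y) S') True A (insert y B) True E"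
            unfolding simrel_def
          proof (intro conjI)
            show "verts G' - (D' \<union> insert (Inl y) S') = Inl ` (verts G - (A \<union> insert y B)) \<union> E"
              using R y by auto
          qed (use R tt in auto)
          then show "dom_wins G A (insert y B) True" using smove.IH yf by blast
        qed
      qed
    qed
  qed
qed

end

context gs begin

definition okp where
  "okp D' S' i \<longleftrightarrow> Inr (Vi i) \<in> D' \<or> Inr (Ui i) \<in> D'
     \<or> (Inr (Vi i) \<notin> D' \<union> S' \<and> Inr (Ui i) \<notin> D' \<union> S')"

definition pend where
  "pend D' S' i \<longleftrightarrow> (Inr (Vi i) \<in> S' \<and> Inr (Ui i) \<notin> D' \<union> S')
     \<or> (Inr (Ui i) \<in> S' \<and> Inr (Vi i) \<notin> D' \<union> S')"

lemma free_pair: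
  assumes "f \<in> verts G' - (D' \<union> S')" "verts G' - (D' \<union> S') \<subseteq> Inr ` HV"
  obtains i where "i \<in> K" "f = Inr (Vi i) \<or> f = Inr (Ui i)"
  using assms by auto

lemma endgame:
  "card (verts G' - (D' \<union> S')) = m \<Longrightarrow> verts G' - (D' \<union> S') \<subseteq> Inr ` HV \<Longrightarrow>
   D' \<subseteq> verts G' \<Longrightarrow> (\<forall>x\<in>verts G. Inl x \<in> D' \<or> (\<exists>z. Inl z \<in> D' \<and> adj G x z)) \<Longrightarrow>
   (\<forall>i\<in>K. okp D' S' i \<or> (t \<and> i = p \<and> pend D' S' i)) \<Longrightarrow> dom_wins G' D' S' t"
proof (induction m arbitrary: D' S' t p)
  case 0
  then have em: "verts G' - (D' \<union> S') = {}" using fin by auto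
  show ?case
  proof (rule dom_wins.over[OF em])
    show "dominating G' D'" unfolding dominating_def
    proof (intro conjI ballI)
      show "D' \<subseteq> verts G'" by fact
      fix v assume v: "v \<in> verts G'"
      show "v \<in> D' \<or> (\<exists>y\<in>D'. adj G' v y)"
      proof (cases v)
        case (Inl x)
        then have "x \<in> verts G" using v verts_G' by auto
        then have "Inl x \<in> D' \<or> (\<exists>z. Inl z \<in> D' \<and> adj G x z)" using "0.prems"(4) by blast
        then show ?thesis using Inl adj_ll by blast
      next
        case (Inr h)
        then obtain i where i: "i \<in> K" "h = Vi i \<or> h = Ui i" using v verts_G' by auto
        have iv: "Inr (Vi i) \<in> verts G'" "Inr (Ui i) \<in> verts G'" using i verts_G' by auto
        have "okp D' S' i \<or> pend D' S' i" using 0 i by auto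
        then have "Inr (Vi i) \<in> D' \<or> Inr (Ui i) \<in> D'"
          unfolding okp_def pend_def using em iv by blast
        then show ?thesis using i Inr adj_VU adj_UV by auto
      qed
    qed
  qed
next
  case (Suc m)
  have ne: "verts G' - (D' \<union> S') \<noteq> {}" using Suc.prems(1) by (metis card.empty nat.distinct(1))
  show ?case
  proof (cases t)
    case True
    show ?thesis
    proof (cases "\<exists>i\<in>K. \<not> okp D' S' i")
      case True
      then obtain i where i: "i \<in> K" "\<not> okp D' S' i" by blast
      then have ip: "i = p" "pend D' S' i" using Suc.prems(5) by auto
      have iv: "Inr (Vi i) \<in> verts G'" "Inr (Ui i) \<in> verts G'" using i(1) verts_G' by auto
      obtain f where f: "f \<in> verts G' - (D' \<union> S')" "f = Inr (Vi i) \<or> f = Inr (Ui i)"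
      proof -
        from ip(2) show ?thesis unfolding pend_def
        proof
          assume "Inr (Vi i) \<in> S' \<and> Inr (Ui i) \<notin> D' \<union> S'"
          then show ?thesis using that[of "Inr (Ui i)"] iv by blast
        next
          assume "Inr (Ui i) \<in> S' \<and> Inr (Vi i) \<notin> D' \<union> S'"
          then show ?thesis using that[of "Inr (Vi i)"] iv by blast
        qed
      qed
      have "dom_wins G' (insert f D') S' False"
      proof (rule Suc.IH)
        show "card (verts G' - (insert f D' \<union> S')) = m"
          using Suc.prems(1) f fin by (simp add: Diff_insert2[symmetric] card_Diff_singleton)
        show "verts G' - (insert f D' \<union> S') \<subseteq> Inr ` HV" using Suc.prems(2) by auto
        show "insert f D' \<subseteq> verts G'" using Suc.prems(3) f by auto
        show "\<forall>x\<in>verts G. Inl x \<in> insert f D' \<or> (\<exists>z. Inl z \<in> insert f D' \<and> adj G x z)"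
          using Suc.prems(4) by blast
        show "\<forall>ia\<in>K. okp (insert f D') S' ia \<or> (False \<and> ia = p \<and> pend (insert f D') S' ia)"
        proof
          fix i' assume i': "i' \<in> K"
          show "okp (insert f D') S' i' \<or> (False \<and> i' = p \<and> pend (insert f D') S' i')"
          proof (cases "i' = i")
            case True
            then show ?thesis using f unfolding okp_def by auto
          next
            case False
            then have "okp D' S' i'" using Suc.prems(5) i' ip by auto
            then show ?thesis using f False unfolding okp_def by auto
          qed
        qed
      qed
      then have "dom_wins G' D' S' True" by (rule dom_wins.dmove[OF f(1)])
      then show ?thesis using \<open>t\<close> by simp
    next
      case False
      then have allok: "\<forall>i\<in>K. okp D' S' i" by blast
      obtain f where f0: "f \<in> verts G' - (D' \<union> S')" using ne by blast
      then obtain i where i: "i \<in> K" "f = Inr (Vi i) \<or> f = Inr (Ui i)"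
        using Suc.prems(2) by (auto elim: free_pair)
      have "dom_wins G' (insert f D') S' False"
      proof (rule Suc.IH)
        show "card (verts G' - (insert f D' \<union> S')) = m"
          using Suc.prems(1) f0 fin by (simp add: Diff_insert2[symmetric] card_Diff_singleton)
        show "verts G' - (insert f D' \<union> S') \<subseteq> Inr ` HV" using Suc.prems(2) by auto
        show "insert f D' \<subseteq> verts G'" using Suc.prems(3) f0 by auto
        show "\<forall>x\<in>verts G. Inl x \<in> insert f D' \<or> (\<exists>z. Inl z \<in> insert f D' \<and> adj G x z)"
          using Suc.prems(4) by blast
        show "\<forall>ia\<in>K. okp (insert f D') S' ia \<or> (False \<and> ia = p \<and> pend (insert f D') S' ia)"
        proof
          fix i' assume i': "i' \<in> K"
          show "okp (insert f D') S' i' \<or> (False \<and> i' = p \<and> pend (insert f D') S' i')"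
          proof (cases "i' = i")
            case True
            then show ?thesis using i unfolding okp_def by auto
          next
            case False
            then have "okp D' S' i'" using allok i' by auto
            then show ?thesis using i False unfolding okp_def by auto
          qed
        qed
      qed
      then have "dom_wins G' D' S' True" by (rule dom_wins.dmove[OF f0])
      then show ?thesis using \<open>t\<close> by simp
    qed
  next
    case False
    then have allok: "\<forall>i\<in>K. okp D' S' i" using Suc.prems(5) by blast
    have tf: "t = False" using False by simp
    show ?thesis unfolding tf
    proof (rule dom_wins.smove[OF ne], intro ballI)
      fix f assume f0: "f \<in> verts G' - (D' \<union> S')"
      then obtain i where i: "i \<in> K" "f = Inr (Vi i) \<or> f = Inr (Ui i)"
        using Suc.prems(2) by (auto elim: free_pair)
      show "dom_wins G' D' (insert f S') True"
      proof (rule Suc.IH[where p = i])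
        show "card (verts G' - (D' \<union> insert f S')) = m"
          using Suc.prems(1) f0 fin by (simp add: Diff_insert2[symmetric] card_Diff_singleton)
        show "verts G' - (D' \<union> insert f S') \<subseteq> Inr ` HV" using Suc.prems(2) by auto
        show "D' \<subseteq> verts G'" using Suc.prems(3) by auto
        show "\<forall>x\<in>verts G. Inl x \<in> D' \<or> (\<exists>z. Inl z \<in> D' \<and> adj G x z)"
          using Suc.prems(4) by blast
        show "\<forall>ia\<in>K. okp D' (insert f S') ia \<or> (True \<and> ia = i \<and> pend D' (insert f S') ia)"
        proof
          fix i' assume i': "i' \<in> K"
          show "okp D' (insert f S') i' \<or> (True \<and> i' = i \<and> pend D' (insert f S') i')"
          proof (cases "i' = i")
            case True
            have "okp D' S' i" using allok i by auto
            then show ?thesis using i f0 True unfolding okp_def pend_def by auto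
          next
            case False
            then have "okp D' S' i'" using allok i' by auto
            then show ?thesis using i False unfolding okp_def by auto
          qed
        qed
      qed
    qed
  qed
qed


definition valid where
  "valid HD HS \<longleftrightarrow> HD \<union> HS \<subseteq> HV \<and>
    (\<forall>i\<in>K. (Vi i \<notin> HD \<union> HS \<and> Ui i \<notin> HD \<union> HS) \<or>
            ((Vi i \<in> HD \<or> Ui i \<in> HD) \<and> Vi i \<in> HD \<union> HS \<and> Ui i \<in> HD \<union> HS))"

lemma freeA:
  "verts G' - ((Inl ` A \<union> Inr ` HD) \<union> (Inl ` B \<union> Inr ` HS)) =
   Inl ` (verts G - (A \<union> B)) \<union> Inr ` (HV - (HD \<union> HS))"
  unfolding verts_G' by auto

lemma valid_step:
  assumes v: "valid HD HS" and i: "i \<in> K" and hh: "{h, h'} = {Vi i, Ui i}" "h \<noteq> h'"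
    and hf: "h \<notin> HD \<union> HS" "h' \<notin> HD \<union> HS"
  shows "valid (insert h' HD) (insert h HS)"
  unfolding valid_def
proof (intro conjI ballI)
  have "h \<in> {Vi i, Ui i}" "h' \<in> {Vi i, Ui i}" using hh(1) by blast+
  then have "h \<in> HV" "h' \<in> HV" using i by auto
  then show "insert h' HD \<union> insert h HS \<subseteq> HV" using v unfolding valid_def by auto
  fix j assume j: "j \<in> K"
  show "(Vi j \<notin> insert h' HD \<union> insert h HS \<and> Ui j \<notin> insert h' HD \<union> insert h HS) \<or>
        ((Vi j \<in> insert h' HD \<or> Ui j \<in> insert h' HD) \<and> Vi j \<in> insert h' HD \<union> insert h HS \<and>
          Ui j \<in> insert h' HD \<union> insert h HS)"
  proof (cases "j = i")
    case True
    then show ?thesis using hh by (auto simp: doubleton_eq_iff)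
  next
    case False
    then have "h \<noteq> Vi j" "h \<noteq> Ui j" "h' \<noteq> Vi j" "h' \<noteq> Ui j" using hh by (auto simp: doubleton_eq_iff)
    then show ?thesis using v j unfolding valid_def by auto
  qed
qed


lemma sum_img_simps[simp]: "Inr h \<notin> Inl ` A" "Inl g \<notin> Inr ` A"
  "(Inr h \<in> Inr ` B) = (h \<in> B)" "(Inl g \<in> Inl ` C) = (g \<in> C)" by auto

lemma inr_mem[simp]: "(Inr h \<in> Inl ` A \<union> Inr ` B) = (h \<in> B)" by auto
lemma inl_mem[simp]: "(Inl h \<in> Inl ` A \<union> Inr ` B) = (h \<in> A)" by auto

lemma dirA:
  assumes "dom_wins G A B t"
  shows "valid HD HS \<Longrightarrow> dom_wins G' (Inl ` A \<union> Inr ` HD) (Inl ` B \<union> Inr ` HS) t"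
  using assms
proof (induction arbitrary: HD HS rule: dom_wins.induct)
  case (over A B t)
  have AV: "A \<subseteq> verts G" using over.hyps(2) unfolding dominating_def by blast
  show ?case
  proof (rule endgame[OF refl, where p = 0])
    show "verts G' - ((Inl ` A \<union> Inr ` HD) \<union> (Inl ` B \<union> Inr ` HS)) \<subseteq> Inr ` HV"
      unfolding freeA using over.hyps(1) by auto
    show "Inl ` A \<union> Inr ` HD \<subseteq> verts G'"
      using AV over.prems unfolding verts_G' valid_def by auto
    show "\<forall>x\<in>verts G. Inl x \<in> Inl ` A \<union> Inr ` HD \<or> (\<exists>z. Inl z \<in> Inl ` A \<union> Inr ` HD \<and> adj G x z)"
    proof
      fix x assume "x \<in> verts G"
      then have "x \<in> A \<or> (\<exists>z\<in>A. adj G x z)" using over.hyps(2) unfolding dominating_def by blast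
      then show "Inl x \<in> Inl ` A \<union> Inr ` HD \<or> (\<exists>z. Inl z \<in> Inl ` A \<union> Inr ` HD \<and> adj G x z)"
        by blast
    qed
    show "\<forall>i\<in>K. okp (Inl ` A \<union> Inr ` HD) (Inl ` B \<union> Inr ` HS) i \<or>
        (t \<and> i = 0 \<and> pend (Inl ` A \<union> Inr ` HD) (Inl ` B \<union> Inr ` HS) i)"
    proof
      fix i assume "i \<in> K"
      then have "(Vi i \<notin> HD \<union> HS \<and> Ui i \<notin> HD \<union> HS) \<or>
            ((Vi i \<in> HD \<or> Ui i \<in> HD) \<and> Vi i \<in> HD \<union> HS \<and> Ui i \<in> HD \<union> HS)"
        using over.prems unfolding valid_def by blast
      then show "okp (Inl ` A \<union> Inr ` HD) (Inl ` B \<union> Inr ` HS) i \<or>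
        (t \<and> i = 0 \<and> pend (Inl ` A \<union> Inr ` HD) (Inl ` B \<union> Inr ` HS) i)"
        unfolding okp_def by simp blast
    qed
  qed
next
  case (dmove x A B)
  have "dom_wins G' (Inl ` insert x A \<union> Inr ` HD) (Inl ` B \<union> Inr ` HS) False"
    using dmove.IH dmove.prems by blast
  then have h: "dom_wins G' (insert (Inl x) (Inl ` A \<union> Inr ` HD)) (Inl ` B \<union> Inr ` HS) False"
    by simp
  have "Inl x \<in> verts G' - ((Inl ` A \<union> Inr ` HD) \<union> (Inl ` B \<union> Inr ` HS))"
    unfolding freeA using dmove.hyps(1) by auto
  from dom_wins.dmove[OF this h] show ?case .
next
  case (smove A B)
  have main: "\<And>HD HS. card (HV - (HD \<union> HS)) = m \<Longrightarrow> valid HD HS \<Longrightarrow>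
      dom_wins G' (Inl ` A \<union> Inr ` HD) (Inl ` B \<union> Inr ` HS) False" for m
  proof (induction m rule: less_induct)
    case (less m HD HS)
    let ?D = "Inl ` A \<union> Inr ` HD" and ?S = "Inl ` B \<union> Inr ` HS"
    show ?case
    proof (rule dom_wins.smove, intro notI)
      assume "verts G' - (?D \<union> ?S) = {}"
      then show False using smove.hyps(1) by (simp add: freeA)
    next
      show "\<forall>f\<in>verts G' - (?D \<union> ?S). dom_wins G' ?D (insert f ?S) True"
      proof
        fix f assume f: "f \<in> verts G' - (?D \<union> ?S)"
        then have "f \<in> Inl ` (verts G - (A \<union> B)) \<union> Inr ` (HV - (HD \<union> HS))"
          unfolding freeA .
        then show "dom_wins G' ?D (insert f ?S) True"
        proof
          assume "f \<in> Inl ` (verts G - (A \<union> B))"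
          then obtain y where y: "f = Inl y" "y \<in> verts G - (A \<union> B)" by blast
          then have "dom_wins G' (Inl ` A \<union> Inr ` HD) (Inl ` insert y B \<union> Inr ` HS) True"
            using smove.IH less.prems(2) by blast
          then show ?thesis using y by simp
        next
          assume "f \<in> Inr ` (HV - (HD \<union> HS))"
          then obtain h where h: "f = Inr h" "h \<in> HV" "h \<notin> HD \<union> HS" by blast
          from h(2) obtain i where i0: "i \<in> K" "h = Vi i \<or> h = Ui i" by blast
          define h' where "h' = (if h = Vi i then Ui i else Vi i)"
          have i: "i \<in> K" "{h, h'} = {Vi i, Ui i}" "h \<noteq> h'"
            using i0 by (auto simp: h'_def)
          have h'HV: "h' \<in> HV" using i0 by (auto simp: h'_def)
          have h'f: "h' \<notin> HD \<union> HS"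
          proof
            assume a: "h' \<in> HD \<union> HS"
            have "(Vi i \<notin> HD \<union> HS \<and> Ui i \<notin> HD \<union> HS) \<or>
                ((Vi i \<in> HD \<or> Ui i \<in> HD) \<and> Vi i \<in> HD \<union> HS \<and> Ui i \<in> HD \<union> HS)"
              using less.prems(2) i(1) unfolding valid_def by blast
            then show False using a h(3) i0 by (auto simp: h'_def split: if_splits)
          qed
          have vs: "valid (insert h' HD) (insert h HS)"
            by (rule valid_step[OF less.prems(2) i h(3) h'f])
          have fin2: "finite (HV - (HD \<union> HS))" by simp
          have s1: "HV - (insert h' HD \<union> insert h HS) \<subseteq> HV - (HD \<union> HS)" by blast
          have s2: "h \<in> HV - (HD \<union> HS)" "h \<notin> HV - (insert h' HD \<union> insert h HS)" using h by blast+
          have ne2: "HV - (insert h' HD \<union> insert h HS) \<noteq> HV - (HD \<union> HS)"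
            using s2 by metis
          have "HV - (insert h' HD \<union> insert h HS) \<subset> HV - (HD \<union> HS)"
            by (rule psubsetI[OF s1 ne2])
          then have lt: "card (HV - (insert h' HD \<union> insert h HS)) < m"
            using psubset_card_mono[OF fin2] less.prems(1) by simp
          have "dom_wins G' (Inl ` A \<union> Inr ` insert h' HD) (Inl ` B \<union> Inr ` insert h HS) False"
            using less.IH[OF lt refl vs] .
          then have dw: "dom_wins G' (insert (Inr h') ?D) (insert f ?S) False" using h(1) by simp
          have m1: "Inr h' \<in> verts G'" unfolding verts_G' using h'HV by blast
          have m2: "Inr h' \<notin> ?D" "Inr h' \<notin> ?S" using h'f by (simp_all only: inr_mem) blast+
          have m3: "Inr h' \<noteq> f" using h(1) i(3) by simp
          have "Inr h' \<in> verts G' - (?D \<union> insert f ?S)"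
            using m1 m2 m3 by blast
          from dom_wins.dmove[OF this dw] show ?thesis .
        qed
      qed
    qed
  qed
  show ?case using main[OF refl smove.prems] .
qed


lemma dirA0: "dom_wins G {} {} t \<Longrightarrow> dom_wins G' {} {} t"
  using dirA[where A="{}" and B="{}" and HD="{}" and HS="{}" and t=t] unfolding valid_def by simp

lemma simrel0:
  assumes "verts G' - (D' \<union> S') = Inl ` (verts G - A)"
    "\<forall>x. Inl x \<in> D' \<longrightarrow> x \<in> A" "\<forall>i. Inr (Vi i) \<notin> D'" "A \<subseteq> verts G"
  shows "simrel 0 D' S' t A {} t {}"
  using assms unfolding simrel_def by simp

lemma dirB: "dom_wins G' {} {} t \<Longrightarrow> dom_wins G {} {} t"
proof (cases t)
  case False
  assume a: "dom_wins G' {} {} t"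
  have "dom_wins G' ({} \<union> Inr ` Ui ` K) ({} \<union> Inr ` Vi ` K) False"
    by (rule force_all) (use a False in auto)
  then have h: "dom_wins G' (Inr ` Ui ` K) (Inr ` Vi ` K) False" by simp
  have "simrel 0 (Inr ` Ui ` K) (Inr ` Vi ` K) False {} {} False {}"
  proof (rule simrel0)
    show "verts G' - (Inr ` Ui ` K \<union> Inr ` Vi ` K) = Inl ` (verts G - {})"
      unfolding verts_G' by auto
  qed auto
  from sim[OF h this] show ?thesis using False by simp
next
  case True
  assume a: "dom_wins G' {} {} t"
  have wv: "Inl u \<in> verts G'" using uin verts_G' by auto
  from a[unfolded True] show ?thesis
  proof (cases rule: dom_wins.cases)
    case over
    then show ?thesis using wv by auto
  next
    case (dmove x)
    then have xv: "x \<in> verts G'" and dx: "dom_wins G' {x} {} False" by auto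
    show ?thesis
    proof (cases x)
      case (Inl y)
      have yv: "y \<in> verts G" using xv Inl verts_G' by auto
      have "dom_wins G' ({x} \<union> Inr ` Ui ` K) ({} \<union> Inr ` Vi ` K) False"
        by (rule force_all) (use dx Inl in auto)
      then have h: "dom_wins G' (insert x (Inr ` Ui ` K)) (Inr ` Vi ` K) False" by simp
      have "simrel 0 (insert x (Inr ` Ui ` K)) (Inr ` Vi ` K) False {y} {} False {}"
      proof (rule simrel0)
        show "verts G' - (insert x (Inr ` Ui ` K) \<union> Inr ` Vi ` K) = Inl ` (verts G - {y})"
          unfolding verts_G' Inl by auto
      qed (use Inl yv in auto)
      from sim[OF h this] have "dom_wins G {y} {} False" .
      then have "dom_wins G {} {} True" using dom_wins.dmove[where x=y and D="{}" and S="{}"] yv by simp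
      then show ?thesis using True by simp
    next
      case (Inr h)
      then obtain j where j: "j \<in> K" "h = Vi j \<or> h = Ui j" using xv verts_G' by auto
      have fa: "dom_wins G' ({x} \<union> Inr ` Ui ` (K - {j})) ({} \<union> Inr ` Vi ` (K - {j})) False"
        by (rule force_all) (use dx Inr j in auto)
      show ?thesis
      proof (cases "h = Ui j")
        case hU: True
        have vf: "Inr (Vi j) \<in> verts G' - ({x} \<union> Inr ` Ui ` (K - {j}) \<union> ({} \<union> Inr ` Vi ` (K - {j})))"
          using j(1) Inr hU unfolding verts_G' by auto
        from fa have dw: "dom_wins G' ({x} \<union> Inr ` Ui ` (K - {j})) (insert (Inr (Vi j)) ({} \<union> Inr ` Vi ` (K - {j}))) True"
          by (cases rule: dom_wins.cases) (use vf in auto)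
        have e1: "{x} \<union> Inr ` Ui ` (K - {j}) = Inr ` Ui ` K" using Inr hU j(1) by auto
        have e2: "insert (Inr (Vi j)) ({} \<union> Inr ` Vi ` (K - {j})) = Inr ` Vi ` K" using j(1) by auto
        have h: "dom_wins G' (Inr ` Ui ` K) (Inr ` Vi ` K) True" using dw unfolding e1 e2 .
        have "simrel 0 (Inr ` Ui ` K) (Inr ` Vi ` K) True {} {} True {}"
        proof (rule simrel0)
          show "verts G' - (Inr ` Ui ` K \<union> Inr ` Vi ` K) = Inl ` (verts G - {})"
            unfolding verts_G' by auto
        qed auto
        from sim[OF h this] show ?thesis using True by simp
      next
        case hV: False
        then have hV: "h = Vi j" using j by auto
        let ?D = "insert (Inr (Vi j)) (Inr ` Ui ` (K - {j}))" and ?S = "Inr ` Vi ` (K - {j})"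
        have h: "dom_wins G' ?D ?S False" using fa Inr hV by simp
        have "simrel j ?D ?S False {u} {} False {Inl u, Inr (Ui j)}"
          unfolding simrel_def
        proof (intro conjI)
          show "verts G' - (?D \<union> ?S) = Inl ` (verts G - ({u} \<union> {})) \<union> {Inl u, Inr (Ui j)}"
            unfolding verts_G' using uin j(1) by auto
        qed (use uin in auto)
        from sim[OF h this] have "dom_wins G {u} {} False" .
        then have "dom_wins G {} {} True" using dom_wins.dmove[where x=u and D="{}" and S="{}"] uin by simp
        then show ?thesis using True by simp
      qed
    qed
  next
    case smove
    then show ?thesis using \<open>t\<close> by simp
  qed
qed

end

theorem proposition5:
  fixes n :: nat and G :: "'a graph" and u :: 'a
  assumes "n \<ge> 2" and "wf_graph G" and "u \<in> verts G"
  shows "outcome (glue G u (hanging_split n) Vc) = outcome G"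
proof -
  interpret gs G u n using assms(2,3) by unfold_locales
  have "\<And>t. dom_wins G' {} {} t = dom_wins G {} {} t" using dirA0 dirB by blast
  then show ?thesis unfolding outcome_def by simp
qed

end
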